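(* For all integers $n,k\ge1$, $$\frac{L_1(k)}{n^k}<\sum_{t=k}^\infty\frac{g_{e,1}(t)}{n^t}<\frac{U_1(k)}{n^k},$$ where $L_1(k)=\left(\cosh\alpha-\frac{6\alpha\sinh\alpha}{5\sqrt{k+1}}-\frac{3}{10(k+1)^{3/2}}\right)24^{-k}$ and $U_1(k)=\left(\frac{24\cosh\alpha}{23}-\frac{\alpha\sinh\alpha}{2\sqrt{k+1}}+\frac{5}{4(k+1)^{3/2}}\right)24^{-k}$.
   Context: $\alpha=\pi/6$. $(a)_m=a(a+1)\cdots(a+m-1)$ is the rising factorial ($(a)_0=1$). For $t\ge0$, $$S_1(t)=\sum_{s=1}^t\frac{(-1)^s(1/2-s)_{s+1}}{s}\sum_{u=1}^s\frac{(-1)^u(-s)_u}{(s+u)!\,(2u-1)!}\left(\frac{\pi^2}{36}\right)^u,\qquad g_{e,1}(t)=\frac{1+S_1(t)}{24^t}.$$ *)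

theory Defs
  imports "HOL-Analysis.Analysis"
begin

definition alpha :: real where "alpha = pi / 6"

definition S1 :: "nat \<Rightarrow> real" where
  "S1 t = (\<Sum>s=1..t. ((-1)^s * pochhammer (1/2 - real s) (s+1) / real s) *
      (\<Sum>u=1..s. (-1)^u * pochhammer (- real s) u / (fact (s+u) * fact (2*u-1))
                   * (pi^2/36)^u))"

definition ge1 :: "nat \<Rightarrow> real" where
  "ge1 t = (1 + S1 t) / 24^t"

definition L1 :: "nat \<Rightarrow> real" where
  "L1 k = (cosh alpha - 6 * alpha * sinh alpha / (5 * sqrt (real k + 1))
           - 3 / (10 * (real k + 1) powr (3/2))) / 24^k"

definition U1 :: "nat \<Rightarrow> real" where
  "U1 k = (24 * cosh alpha / 23 - alpha * sinh alpha / (2 * sqrt (real k + 1))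
           + 5 / (4 * (real k + 1) powr (3/2))) / 24^k"

end

theory Submission
  imports Defs
begin


definition cc :: "nat \<Rightarrow> real" where "cc u = alpha^(2*u) / fact (2*u)"
definition dd :: "nat \<Rightarrow> nat \<Rightarrow> real" where
  "dd s u = (if 1 \<le> u \<and> u \<le> s then real u / real s * real (binomial (2 * s) (s-u)) / 4^s else 0)"

lemma pochA: "(-1::real)^s * pochhammer (1/2 - real s) (s+1) = fact (2 * s) / (2 * 4^s * fact s)"
proof -
  have "pochhammer (1/2 - real s) (s+1) = pochhammer (- (real s - 1/2)) (s+1)" by (simp add: algebra_simps)
  also have "\<dots> = (-1)^(s+1) * pochhammer (-1/2) (Suc s)"
    by (subst pochhammer_minus) (simp add: algebra_simps)
  also have "pochhammer (-1/2::real) (Suc s) = (-1/2) * pochhammer (1/2) s"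
    by (subst pochhammer_rec) simp
  finally have 0: "pochhammer (1/2 - real s) (s+1) = (-1)^s * pochhammer (1/2) s / 2"
    by (simp add: power_add)
  have m: "(-1::real)^s * (-1)^s = 1" by (simp add: power_mult_distrib[symmetric])
  have 1: "(-1::real)^s * pochhammer (1/2 - real s) (s+1) = pochhammer (1/2) s / 2"
    unfolding 0 using m by (simp add: algebra_simps)
  have "pochhammer (2 * (1/2::real)) (2 * s) = of_nat (2^(2 * s)) * pochhammer (1/2) s * pochhammer (1/2+1/2) s"
    by (rule pochhammer_double)
  hence "fact (2 * s) = (4::real)^s * pochhammer (1/2) s * fact s"
    by (simp add: pochhammer_fact power_mult)
  hence "pochhammer (1/2::real) s = fact (2 * s) / (4^s * fact s)"
    by (simp add: field_simps)
  with 1 show ?thesis by simp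
qed

lemma pochB: assumes "u \<le> s" shows "(-1::real)^u * pochhammer (- real s) u = fact s / fact (s-u)"
proof -
  have "pochhammer (- real s) u = (-1)^u * pochhammer (real s - real u + 1) u"
    by (rule pochhammer_minus)
  hence 1: "(-1::real)^u * pochhammer (- real s) u = pochhammer (real s - real u + 1) u"
    by (simp add: power_mult_distrib[symmetric])
  have "pochhammer (1::real) s = pochhammer 1 (s-u) * pochhammer (1 + of_nat (s-u)) (s - (s-u))"
    by (rule pochhammer_product) simp
  hence "fact s = fact (s-u) * pochhammer (real s - real u + 1) u"
    using assms by (simp add: pochhammer_fact of_nat_diff algebra_simps)
  with 1 show ?thesis by (simp add: field_simps)
qed

lemma summand_eq:
  assumes u1: "1 \<le> u" and us: "u \<le> s"
  shows "((-1)^s * pochhammer (1/2 - real s) (s+1) / real s) *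
      ((-1)^u * pochhammer (- real s) u / (fact (s+u) * fact (2*u-1)) * (pi^2/36)^u) = cc u * dd s u"
proof -
  have s1: "s \<ge> 1" using assms by simp
  have a: "alpha^(2*u) = (pi^2/36::real)^u"
    by (simp add: alpha_def power_mult power_divide)
  have b: "real (binomial (2 * s) (s-u)) = fact (2 * s) / (fact (s-u) * fact (s+u))"
    using us by (subst binomial_fact) (auto simp: algebra_simps)
  have f: "(fact (2*u) :: real) = real (2*u) * fact (2*u-1)"
    using u1 by (subst fact_reduce) auto
  have lhs: "((-1)^s * pochhammer (1/2 - real s) (s+1) / real s) *
      ((-1)^u * pochhammer (- real s) u / (fact (s+u) * fact (2*u-1)) * (pi^2/36)^u)
      = (fact (2 * s) / (2 * 4^s * fact s)) / real s * ((fact s / fact (s-u)) / (fact (s+u) * fact (2*u-1)) * (pi^2/36)^u)"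
    by (simp only: pochA pochB[OF us] times_divide_eq_left mult.assoc)
  show ?thesis
    unfolding lhs cc_def dd_def a b f using u1 us s1
    by (simp add: field_simps)
qed

lemma binom_id_aux:
  fixes u p :: nat
  shows "real (u + p + 2) * (real (binomial (2*u+2*p+2) (p+2)) - real (binomial (2*u+2*p+2) p))
     = real u * real (binomial (2*u+2*p+4) (p+2))"
proof -
  define F where "F = (fact :: nat \<Rightarrow> real)"
  have c1: "real (binomial (2*u+2*p+2) (p+2)) = F (2*u+2*p+2) / (F (p+2) * F (2*u+p))"
    unfolding F_def by (subst binomial_fact) (auto simp: algebra_simps)
  have c2: "real (binomial (2*u+2*p+2) p) = F (2*u+2*p+2) / (F p * F (2*u+p+2))"
    unfolding F_def by (subst binomial_fact) (auto simp: algebra_simps)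
  have c3: "real (binomial (2*u+2*p+4) (p+2)) = F (2*u+2*p+4) / (F (p+2) * F (2*u+p+2))"
    unfolding F_def by (subst binomial_fact) (auto simp: algebra_simps)
  have f1: "F (p+2) = real (p+2) * real (p+1) * F p" unfolding F_def
    by (simp add: algebra_simps)
  have f2: "F (2*u+p+2) = real (2*u+p+2) * real (2*u+p+1) * F (2*u+p)" unfolding F_def
    by (simp add: algebra_simps)
  have ff: "\<And>n. (fact (n+2)::real) = real (n+2) * real (n+1) * fact n" by (simp add: algebra_simps)
  have f3: "F (2*u+2*p+4) = real (2*u+2*p+4) * real (2*u+2*p+3) * F (2*u+2*p+2)" unfolding F_def
    using ff[of "2*u+2*p+2"] by (simp add: numeral_eq_Suc)
  have pos: "F p > 0" "F (2*u+p) > 0" "F (2*u+2*p+2) > 0" unfolding F_def by auto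
  have alg0: "\<And>A B C D1 D2 K Y::real. A > 0 \<Longrightarrow> B > 0 \<Longrightarrow> D1 > 0 \<Longrightarrow> D2 > 0 \<Longrightarrow>
     Y * (D2 - D1) = K \<Longrightarrow> Y * (C / (D1 * A * B) - C / (A * (D2 * B))) = K * C / (D1 * A * (D2 * B))"
    by (simp add: field_simps)
  have alg: "\<And>A B C x y::real. A > 0 \<Longrightarrow> B > 0 \<Longrightarrow> C > 0 \<Longrightarrow> x \<ge> 0 \<Longrightarrow> y \<ge> 0 \<Longrightarrow>
    (y + x + 2) * (C / ((x+2) * (x+1) * A * B) - C / (A * ((2*y+x+2) * (2*y+x+1) * B)))
    = y * ((2*y+2*x+4) * (2*y+2*x+3) * C / ((x+2) * (x+1) * A * ((2*y+x+2) * (2*y+x+1) * B)))"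
  proof -
    fix A B C x y :: real assume h: "A > 0" "B > 0" "C > 0" "x \<ge> 0" "y \<ge> 0"
    have "(x+2) * (x+1) > 0" "(2*y+x+2) * (2*y+x+1) > 0" using h by auto
    from alg0[OF h(1,2) this, of "y+x+2" "y*((2*y+2*x+4) * (2*y+2*x+3))" C]
    show "(y + x + 2) * (C / ((x+2) * (x+1) * A * B) - C / (A * ((2*y+x+2) * (2*y+x+1) * B)))
    = y * ((2*y+2*x+4) * (2*y+2*x+3) * C / ((x+2) * (x+1) * A * ((2*y+x+2) * (2*y+x+1) * B)))"
      by (simp add: algebra_simps)
  qed
  show ?thesis unfolding c1 c2 c3 f1 f2 f3 using alg[OF pos, of "real p" "real u"] by (simp add: ac_simps)
qed
lemma binom_id:
  assumes "1 \<le> u" "u \<le> t"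
  shows "real (t+1) * (real (binomial (2*t) (t-u+1)) - real (binomial (2*t) (t+u+1)))
     = real u * real (binomial (2*t+2) (t+1-u))"
proof (cases "u = t")
  case True
  then show ?thesis by (simp add: algebra_simps binomial_eq_0)
next
  case False
  define p where "p = t - u - 1"
  have t: "t = u + p + 1" using False assms unfolding p_def by simp
  have sym: "binomial (2*u+2*p+2) (2*u+p+2) = binomial (2*u+2*p+2) p" by (subst binomial_symmetric) auto
  have e1: "2*t = 2*u+2*p+2" "t-u+1 = p+2" "2*t+2 = 2*u+2*p+4" "t+1-u = p+2" using t by simp_all
  have b1: "binomial (2*t) (t-u+1) = binomial (2*u+2*p+2) (p+2)" by (simp only: e1)
  have e: "2*t = 2*u+2*p+2" "t+u+1 = 2*u+p+2" using t by simp_all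
  have b2: "binomial (2*t) (t+u+1) = binomial (2*u+2*p+2) p" unfolding sym[symmetric] by (simp only: e)
  have b3: "binomial (2*t+2) (t+1-u) = binomial (2*u+2*p+4) (p+2)" by (simp only: e1(3,4))
  have b4: "real (t+1) = real (u+p+2)" by (simp add: t)
  show ?thesis unfolding b1 b2 b3 b4 by (rule binom_id_aux)
qed

definition EE :: "nat \<Rightarrow> nat \<Rightarrow> real" where
  "EE t u = (if u = 0 then 0 else (\<Sum>i=t+1-u..t+u. real (binomial (2*t) i)) / 4^t)"

lemma EE_step:
  assumes u1: "1 \<le> u" and ut: "u \<le> t"
  shows "EE t u - EE (Suc t) u = dd (Suc t) u"
proof -
  define a where "a = t - u"
  define f where "f j = real (binomial (2*t) (a+j))" for j
  have S: "(\<Sum>i=t+1-u..t+u. real (binomial (2*t) i)) = (\<Sum>j<2*u. f (Suc j))"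
  proof -
    have "(\<Sum>i=t+1-u..t+u. real (binomial (2*t) i)) = (\<Sum>j=0..t+u-(t+1-u). real (binomial (2*t) (t+1-u+j)))"
      by (subst sum.atLeastAtMost_shift_0) (use assms in auto)
    also have "{0..t+u-(t+1-u)} = {..<2*u}" using assms by auto
    also have "(\<Sum>j<2*u. real (binomial (2*t) (t+1-u+j))) = (\<Sum>j<2*u. f (Suc j))"
    proof (rule sum.cong[OF refl])
      fix j have "t+1-u+j = a + Suc j" using assms unfolding a_def by arith
      then show "real (binomial (2*t) (t+1-u+j)) = f (Suc j)" unfolding f_def by simp
    qed
    finally show ?thesis .
  qed
  have S': "(\<Sum>i=Suc t+1-u..Suc t+u. real (binomial (2*Suc t) i)) = (\<Sum>j<2*u. f j + 2 * f (Suc j) + f (Suc (Suc j)))"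
  proof -
    have "(\<Sum>i=Suc t+1-u..Suc t+u. real (binomial (2*Suc t) i)) = (\<Sum>j=0..Suc t+u-(Suc t+1-u). real (binomial (2*Suc t) (Suc t+1-u+j)))"
      by (subst sum.atLeastAtMost_shift_0) (use assms in auto)
    also have "{0..Suc t+u-(Suc t+1-u)} = {..<2*u}" using assms by auto
    also have "(\<Sum>j<2*u. real (binomial (2*Suc t) (Suc t+1-u+j))) = (\<Sum>j<2*u. f j + 2 * f (Suc j) + f (Suc (Suc j)))"
    proof (rule sum.cong)
      fix j assume "j \<in> {..<2*u}"
      have "2 * Suc t = Suc (Suc (2*t))" "Suc t + 1 - u + j = Suc (Suc (a+j))" using assms unfolding a_def by auto
      then show "real (binomial (2*Suc t) (Suc t+1-u+j)) = f j + 2 * f (Suc j) + f (Suc (Suc j))"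
        unfolding f_def by simp
    qed simp
    finally show ?thesis .
  qed
  have tel: "4 * (\<Sum>j<2*u. f (Suc j)) - (\<Sum>j<2*u. f j + 2 * f (Suc j) + f (Suc (Suc j)))
     = (\<Sum>j<2*u. f (Suc j) - f j) - (\<Sum>j<2*u. f (Suc (Suc j)) - f (Suc j))"
  proof -
    have "(\<Sum>j<2*u. f j + 2 * f (Suc j) + f (Suc (Suc j))) = (\<Sum>j<2*u. f j) + 2*(\<Sum>j<2*u. f (Suc j)) + (\<Sum>j<2*u. f (Suc (Suc j)))"
      by (simp add: sum.distrib sum_distrib_left)
    moreover have "(\<Sum>j<2*u. f (Suc j) - f j) = (\<Sum>j<2*u. f (Suc j)) - (\<Sum>j<2*u. f j)"
      by (simp add: sum_subtractf)
    moreover have "(\<Sum>j<2*u. f (Suc (Suc j)) - f (Suc j)) = (\<Sum>j<2*u. f (Suc (Suc j))) - (\<Sum>j<2*u. f (Suc j))"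
      by (simp add: sum_subtractf)
    ultimately show ?thesis by linarith
  qed
  also have "\<dots> = (f (2*u) - f 0) - (f (Suc (2*u)) - f (Suc 0))"
    by (simp only: sum_lessThan_telescope[of "\<lambda>j. f (Suc j)"] sum_lessThan_telescope[of f])
  also have "f (2*u) = f 0"
  proof -
    have "binomial (2*t) (t-u) = binomial (2*t) (2*t - (t-u))" by (rule binomial_symmetric) simp
    moreover have "2*t - (t-u) = a + 2*u" unfolding a_def using assms by simp
    ultimately show ?thesis unfolding f_def by (simp add: a_def)
  qed
  finally have tel1: "4 * (\<Sum>j<2*u. f (Suc j)) - (\<Sum>j<2*u. f j + 2 * f (Suc j) + f (Suc (Suc j)))
       = (f 0 - f 0) - (f (Suc (2*u)) - f (Suc 0))" .
  have fa: "f (Suc (2*u)) = real (binomial (2*t) (t+u+1))" unfolding f_def a_def using assms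
    by (simp add: algebra_simps)
  have fb: "f (Suc 0) = real (binomial (2*t) (t-u+1))" unfolding f_def a_def using assms
    by (simp add: algebra_simps)
  have tel2: "4 * (\<Sum>j<2*u. f (Suc j)) - (\<Sum>j<2*u. f j + 2 * f (Suc j) + f (Suc (Suc j)))
       = real (binomial (2*t) (t-u+1)) - real (binomial (2*t) (t+u+1))"
    using tel1 fa fb by simp
  have "EE t u - EE (Suc t) u = (4 * (\<Sum>j<2*u. f (Suc j)) - (\<Sum>j<2*u. f j + 2 * f (Suc j) + f (Suc (Suc j)))) / 4^(Suc t)"
    unfolding EE_def using u1 S S' by (simp add: field_simps)
  also have "\<dots> = real u * real (binomial (2*t+2) (t+1-u)) / real (t+1) / 4^(Suc t)"
  proof -
    have "real (binomial (2*t) (t-u+1)) - real (binomial (2*t) (t+u+1)) = real u * real (binomial (2*t+2) (t+1-u)) / real (t+1)"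
      using binom_id[OF assms] by (simp add: field_simps)
    then show ?thesis unfolding tel2 by simp
  qed
  also have "\<dots> = dd (Suc t) u" unfolding dd_def using assms by simp
  finally show ?thesis .
qed



lemma row_sum_ext: "n \<le> m \<Longrightarrow> (\<Sum>i=0..m. real (binomial n i)) = 2^n"
proof (induct m rule: dec_induct)
  case base
  have "(\<Sum>i=0..n. real (binomial n i)) = real (\<Sum>i\<le>n. binomial n i)"
    by (simp add: atLeast0AtMost)
  also have "\<dots> = 2^n" by (simp add: choose_row_sum)
  finally show ?case .
next
  case (step m)
  then show ?case by (simp add: binomial_eq_0)
qed

lemma EE_full: assumes "t < u" shows "EE t u = 1"
proof -
  have "t+1-u = 0" using assms by simp
  then have "EE t u = (\<Sum>i=0..t+u. real (binomial (2*t) i)) / 4^t" unfolding EE_def using assms by simp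
  also have "\<dots> = 1" using assms by (subst row_sum_ext) (auto simp: power_mult)
  finally show ?thesis .
qed

lemma row_sum_1: "(\<Sum>i=Suc 0..m. real (binomial m i)) = 2^m - 1"
proof -
  have "(\<Sum>i=0..m. real (binomial m i)) = 1 + (\<Sum>i=Suc 0..m. real (binomial m i))"
    by (subst sum.atLeast_Suc_atMost) auto
  moreover have "(\<Sum>i=0..m. real (binomial m i)) = 2^m" by (rule row_sum_ext) simp
  ultimately show ?thesis by simp
qed

lemma EE_diag: "EE (Suc t) (Suc t) = 1 - 1/4^(Suc t)"
proof -
  define m where "m = 2 * Suc t"
  have I: "{Suc t + 1 - Suc t..Suc t + Suc t} = {Suc 0..m}" unfolding m_def by auto
  have "EE (Suc t) (Suc t) = (\<Sum>i\<in>{Suc 0..m}. real (binomial m i)) / 4^(Suc t)"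
    unfolding EE_def I m_def[symmetric] by simp
  also have "\<dots> = (2^m - 1) / 4^(Suc t)" by (simp only: row_sum_1)
  also have "(2::real)^m = 4^(Suc t)" unfolding m_def by (simp add: power_mult)
  finally show ?thesis by (simp add: field_simps)
qed

lemma EE_step_all:
  assumes u1: "1 \<le> u"
  shows "EE t u - EE (Suc t) u = dd (Suc t) u"
proof -
  consider "u \<le> t" | "u = Suc t" | "u > Suc t" by linarith
  then show ?thesis
  proof cases
    case 1 then show ?thesis using EE_step u1 by blast
  next
    case 2 then show ?thesis using EE_full[of t u] EE_diag[of t] by (simp add: dd_def)
  next
    case 3 then show ?thesis using EE_full[of t u] EE_full[of "Suc t" u] by (simp add: dd_def)
  qed
qed

lemma EE_tel: assumes "1 \<le> u" shows "1 - EE t u = (\<Sum>s=1..t. dd s u)"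
proof (induct t)
  case 0
  have "EE 0 u = 1" using EE_full[of 0 u] assms by simp
  then show ?case by simp
next
  case (Suc t)
  then show ?case using EE_step_all[OF assms, of t] by simp
qed

lemma S1_eq: "S1 t = (\<Sum>u=1..t. cc u * (1 - EE t u))"
proof -
  have "S1 t = (\<Sum>s=1..t. \<Sum>u=1..s. cc u * dd s u)"
    unfolding S1_def sum_distrib_left
  proof (intro sum.cong refl)
    fix s u assume "s \<in> {1..t}" "u \<in> {1..s}"
    then show "((-1)^s * pochhammer (1/2 - real s) (s+1) / real s) *
      ((-1)^u * pochhammer (- real s) u / (fact (s+u) * fact (2*u-1)) * (pi^2/36)^u) = cc u * dd s u"
      by (intro summand_eq) auto
  qed
  also have "\<dots> = (\<Sum>s=1..t. \<Sum>u=1..t. cc u * dd s u)"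
  proof (rule sum.cong[OF refl])
    fix s assume s: "s \<in> {1..t}"
    show "(\<Sum>u=1..s. cc u * dd s u) = (\<Sum>u=1..t. cc u * dd s u)"
      using s by (intro sum.mono_neutral_left) (auto simp: dd_def)
  qed
  also have "\<dots> = (\<Sum>u=1..t. \<Sum>s=1..t. cc u * dd s u)" by (rule sum.swap)
  also have "\<dots> = (\<Sum>u=1..t. cc u * (1 - EE t u))"
    by (rule sum.cong[OF refl]) (simp add: EE_tel sum_distrib_left)
  finally show ?thesis .
qed



lemma cc_sums: "cc sums cosh alpha"
proof -
  have "(\<lambda>n. (\<lambda>n. if even n then alpha ^ n /\<^sub>R fact n else 0) (2*n)) sums cosh alpha"
    by (subst sums_mono_reindex) (auto simp: strict_mono_def cosh_converges elim!: evenE)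
  moreover have "cc = (\<lambda>n. (\<lambda>n. if even n then alpha ^ n /\<^sub>R fact n else 0) (2*n))"
    by (auto simp: cc_def fun_eq_iff divide_inverse mult.commute)
  ultimately show ?thesis by simp
qed

lemma sinh_sums: "(\<lambda>n. alpha^(2*n+1) / fact (2*n+1)) sums sinh alpha"
proof -
  have "(\<lambda>n. (\<lambda>n. if even n then 0 else alpha ^ n /\<^sub>R fact n) (2*n+1)) sums sinh alpha"
    by (subst sums_mono_reindex) (auto simp: strict_mono_def sinh_converges elim!: oddE)
  then show ?thesis by (simp add: divide_inverse mult.commute)
qed

lemma ucc_sums: "(\<lambda>u. real (2*u) * cc u) sums (alpha * sinh alpha)"
proof -
  have "(\<lambda>n. alpha * (alpha^(2*n+1) / fact (2*n+1))) sums (alpha * sinh alpha)"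
    by (rule sums_mult[OF sinh_sums])
  moreover have "(\<lambda>n. real (2*Suc n) * cc (Suc n)) = (\<lambda>n. alpha * (alpha^(2*n+1) / fact (2*n+1)))"
  proof
    fix n
    have "(fact (2*Suc n) :: real) = real (2*Suc n) * fact (2*n+1)" by simp
    then show "real (2*Suc n) * cc (Suc n) = alpha * (alpha^(2*n+1) / fact (2*n+1))"
      unfolding cc_def by (simp add: field_simps del: of_nat_Suc)
  qed
  ultimately have "(\<lambda>n. real (2*Suc n) * cc (Suc n)) sums (alpha * sinh alpha)" by simp
  then show ?thesis by (subst (asm) sums_Suc_iff) simp
qed

lemma D_sums: "(\<lambda>u. cc u * EE t u) sums (cosh alpha - (1 + S1 t))"
proof -
  have "(\<lambda>u. cc u * (1 - EE t u)) sums (\<Sum>u\<in>{0..t}. cc u * (1 - EE t u))"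
    by (rule sums_finite) (auto simp: EE_full)
  moreover have "(\<Sum>u\<in>{0..t}. cc u * (1 - EE t u)) = 1 + S1 t"
    by (simp add: S1_eq sum.atLeast_Suc_atMost cc_def EE_def)
  ultimately have "(\<lambda>u. cc u * (1 - EE t u)) sums (1 + S1 t)" by simp
  from sums_diff[OF cc_sums this] show ?thesis by (simp add: algebra_simps)
qed



definition bb :: "nat \<Rightarrow> real" where "bb t = real (binomial (2*t) t) / 4^t"

lemma bb_pos: "bb t > 0" unfolding bb_def by simp

lemma bb_Suc: "bb (Suc t) = bb t * ((2*real t+1) / (2*real t+2))"
proof -
  have c1: "real (binomial (2*Suc t) (Suc t)) = fact (2*t+2) / (fact (t+1) * fact (t+1))"
    by (subst binomial_fact) (auto simp: algebra_simps)
  have c2: "real (binomial (2*t) t) = fact (2*t) / (fact t * fact t)"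
    by (subst binomial_fact) (auto simp: algebra_simps)
  have f1: "(fact (2*t+2)::real) = (2*(real t+1)) * (2*real t+1) * fact (2*t)" by (simp add: algebra_simps)
  have f2: "(fact (t+1)::real) = (real t+1) * fact t" by (simp add: algebra_simps)
  have alg: "\<And>b c F G P::real. b > 0 \<Longrightarrow> G > 0 \<Longrightarrow> P > 0 \<Longrightarrow>
     (2*b)*c*F / (b*G*(b*G)) / (4*P) = F / (G*G) / P * (c / (2*b))"
    by (simp add: field_simps)
  have e: "2*real t+2 = 2*(real t+1)" by simp
  show ?thesis unfolding bb_def c1 c2 f1 f2 e
    using alg[of "real t + 1" "fact t" "4^t" "2*real t+1" "fact (2*t)"] by simp
qed

lemma bb_lo: "bb t ^ 2 * (4 * real t + 1) \<ge> 1"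
proof (induct t)
  case 0 then show ?case by (simp add: bb_def)
next
  case (Suc t)
  have d: "(2*real t+2)^2 > 0" by (simp add: add_pos_nonneg)
  have poly: "(4*real t+1) * (2*real t+2)^2 \<le> (2*real t+1)^2 * (4*real t+5)"
    by (simp add: power2_eq_square algebra_simps)
  have q: "(4*real t+1) \<le> (2*real t+1)^2 * (4*real t+5) / (2*real t+2)^2"
    using pos_le_divide_eq[OF d] poly by simp
  have "bb (Suc t) ^ 2 * (4 * real (Suc t) + 1) = bb t ^ 2 * (((2*real t+1)/(2*real t+2))^2 * (4 * real (Suc t) + 1))"
    unfolding bb_Suc by (simp only: power_mult_distrib mult.assoc)
  also have "(4 * real (Suc t) + 1) = 4*real t+5" by simp
  also have "((2*real t+1)/(2*real t+2))^2 = (2*real t+1)^2 / (2*real t+2)^2" by (rule power_divide)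
  finally have "bb (Suc t) ^ 2 * (4*real t+5) = bb t ^ 2 * ((2*real t+1)^2 * (4*real t+5) / (2*real t+2)^2)"
    by (simp only: times_divide_eq_left)
  moreover have "bb t ^ 2 \<ge> 0" by simp
  ultimately have "bb (Suc t) ^ 2 * (4*real t+5) \<ge> bb t ^ 2 * (4 * real t + 1)"
    using mult_left_mono[OF q, of "bb t ^ 2"] by linarith
  moreover have "4 * real (Suc t) + 1 = 4*real t+5" by simp
  ultimately show ?case using Suc by (simp only:)
qed

lemma bb_hi: "bb t ^ 2 * (2 * real t + 1) \<le> 1"
proof (induct t)
  case 0 then show ?case by (simp add: bb_def)
next
  case (Suc t)
  have d: "(2*real t+2)^2 > 0" by (simp add: add_pos_nonneg)
  have poly: "(2*real t+1)^2 * (2*real t+3) \<le> (2*real t+1) * (2*real t+2)^2"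
    by (simp add: power2_eq_square algebra_simps)
  have q: "(2*real t+1)^2 * (2*real t+3) / (2*real t+2)^2 \<le> (2*real t+1)"
    using pos_divide_le_eq[OF d] poly by simp
  have "bb (Suc t) ^ 2 * (2 * real (Suc t) + 1) = bb t ^ 2 * (((2*real t+1)/(2*real t+2))^2 * (2 * real (Suc t) + 1))"
    unfolding bb_Suc by (simp only: power_mult_distrib mult.assoc)
  also have "(2 * real (Suc t) + 1) = 2*real t+3" by simp
  also have "((2*real t+1)/(2*real t+2))^2 = (2*real t+1)^2 / (2*real t+2)^2" by (rule power_divide)
  finally have "bb (Suc t) ^ 2 * (2*real t+3) = bb t ^ 2 * ((2*real t+1)^2 * (2*real t+3) / (2*real t+2)^2)"
    by (simp only: times_divide_eq_left)
  moreover have "bb t ^ 2 \<ge> 0" by simp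
  ultimately have "bb (Suc t) ^ 2 * (2*real t+3) \<le> bb t ^ 2 * (2 * real t + 1)"
    using mult_left_mono[OF q, of "bb t ^ 2"] by linarith
  moreover have "2 * real (Suc t) + 1 = 2*real t+3" by simp
  ultimately show ?case using Suc by (simp only:)
qed



lemma bin_step: assumes "u < t"
  shows "real (binomial (2*t) (t+u+1)) = real (binomial (2*t) (t+u)) * ((real t - real u) / (real t + real u + 1))"
proof -
  have "Suc (t+u) * (2*t choose Suc (t+u)) = (2*t - (t+u)) * (2*t choose (t+u))"
    using binomial_absorption[of "t+u" "2*t"] binomial_absorb_comp[of "2*t" "t+u"] by simp
  moreover have "2*t - (t+u) = t - u" by simp
  ultimately have "real (Suc (t+u)) * real (2*t choose (t+u+1)) = real (t-u) * real (2*t choose (t+u))"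
    by (metis Suc_eq_plus1 of_nat_mult)
  moreover have "real (t-u) = real t - real u" using assms by simp
  ultimately have "(real t + real u + 1) * real (2*t choose (t+u+1)) = (real t - real u) * real (2*t choose (t+u))"
    by (simp add: algebra_simps)
  moreover have "real t + real u + 1 > 0" by simp
  ultimately show ?thesis by (simp add: field_simps)
qed

lemma ratio_ineq:
  fixes T U r :: real
  assumes T: "U + 1 \<le> T" and U: "U \<ge> 0" and r: "r = 1 - U^2/T" and rp: "0 \<le> r"
  shows "r * ((T - U) / (T + U + 1)) \<ge> 1 - (U+1)^2/T"
proof -
  define b where "b = (2*U+1)/(T+U+1)"
  have Tp: "T > 0" using T U by linarith
  have b0: "b \<ge> 0" unfolding b_def using U Tp by simp
  have bT: "b \<le> (2*U+1)/T" unfolding b_def using U Tp by (intro divide_left_mono) auto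
  have e: "(T - U) / (T + U + 1) = 1 - b" unfolding b_def using U Tp by (simp add: field_simps)
  have r1: "r \<le> 1" using r U Tp by simp
  have "r * b \<le> b" using mult_left_le_one_le[OF b0 rp r1] by (simp add: mult.commute)
  hence "r * (1 - b) \<ge> r - (2*U+1)/T" using bT by (simp add: algebra_simps)
  moreover have "r - (2*U+1)/T = 1 - (U+1)^2/T" unfolding r using Tp by (simp add: field_simps power2_eq_square)
  ultimately show ?thesis unfolding e by simp
qed

lemma bin_ratio: assumes t1: "1 \<le> t"
  shows "u \<le> t \<Longrightarrow> real (binomial (2*t) (t+u)) \<ge> real (binomial (2*t) t) * (1 - real u^2 / real t)"
proof (induct u)
  case 0 then show ?case by simp
next
  case (Suc u)
  have ut: "u < t" using Suc by simp
  define C0 where "C0 = real (binomial (2*t) t)"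
  define Cu where "Cu = real (binomial (2*t) (t+u))"
  have C0: "C0 \<ge> 0" unfolding C0_def by simp
  have IH: "Cu \<ge> C0 * (1 - real u^2 / real t)" using Suc ut unfolding C0_def Cu_def by simp
  have Cn: "real (binomial (2*t) (t + Suc u)) = Cu * ((real t - real u) / (real t + real u + 1))"
    using bin_step[OF ut] unfolding Cu_def by simp
  show ?case
  proof (cases "1 - (real u + 1)^2 / real t \<le> 0")
    case True
    then have neg: "1 - real (Suc u)^2 / real t \<le> 0" by (simp add: add.commute)
    have "C0 * (1 - real (Suc u)^2 / real t) \<le> 0" using mult_nonneg_nonpos[OF C0 neg] .
    then show ?thesis unfolding C0_def by simp
  next
    case False
    have rp: "0 \<le> 1 - real u^2 / real t"
    proof -
      have "real u^2 \<le> (real u + 1)^2" by (simp add: power_mono)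
      hence "real u^2 / real t \<le> (real u + 1)^2 / real t" by (simp add: divide_right_mono)
      thus ?thesis using False by linarith
    qed
    have q: "0 \<le> (real t - real u) / (real t + real u + 1)" using ut by simp
    have "Cu * ((real t - real u) / (real t + real u + 1)) \<ge> C0 * (1 - real u^2 / real t) * ((real t - real u) / (real t + real u + 1))"
      using mult_right_mono[OF IH q] .
    moreover have "(1 - real u^2 / real t) * ((real t - real u) / (real t + real u + 1)) \<ge> 1 - (real u + 1)^2 / real t"
      using ratio_ineq[of "real u" "real t" "1 - real u^2 / real t"] ut rp by simp
    then have "C0 * ((1 - real u^2 / real t) * ((real t - real u) / (real t + real u + 1))) \<ge> C0 * (1 - (real u + 1)^2 / real t)"
      using mult_left_mono[OF _ C0] by blast
    ultimately show ?thesis unfolding Cn C0_def[symmetric] by (simp add: algebra_simps)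
  qed
qed



lemma E_up: "EE t u \<le> real (2*u) * bb t"
proof -
  consider "u = 0" | "1 \<le> u" "u \<le> t" | "t < u" by linarith
  then show ?thesis
  proof cases
    case 1 then show ?thesis by (simp add: EE_def)
  next
    case 2
    have "(\<Sum>i=t+1-u..t+u. real (binomial (2*t) i)) \<le> real (card {t+1-u..t+u}) * real (binomial (2*t) t)"
      by (rule sum_bounded_above) (simp add: binomial_maximum')
    also have "card {t+1-u..t+u} = 2*u" using 2 by simp
    finally have "(\<Sum>i=t+1-u..t+u. real (binomial (2*t) i)) / 4^t \<le> real (2*u) * real (binomial (2*t) t) / 4^t"
      by (simp add: divide_right_mono)
    then show ?thesis using 2 unfolding EE_def bb_def by simp
  next
    case 3
    have "(real (2*u) * bb t)^2 = (2*real u)^2 * bb t^2" by (simp add: power_mult_distrib)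
    also have "(2*real u)^2 * bb t^2 \<ge> (4*real t+1) * bb t^2"
    proof (rule mult_right_mono)
      have "real u \<ge> real t + 1" using 3 by simp
      hence "(2*real u)^2 \<ge> (2*real t+2)^2" by (intro power_mono) auto
      moreover have "(2*real t+2)^2 \<ge> 4*real t+1" by (simp add: power2_eq_square algebra_simps)
      ultimately show "(2*real u)^2 \<ge> 4*real t+1" by linarith
    qed simp
    finally have "(real (2*u) * bb t)^2 \<ge> 1^2" using bb_lo[of t] by (simp add: mult.commute)
    hence "1 \<le> real (2*u) * bb t" by (rule power2_le_imp_le) (simp add: bb_pos less_imp_le)
    then show ?thesis using EE_full[OF 3] by simp
  qed
qed

lemma bin_ge_end: assumes "u \<le> t" "i \<in> {t+1-u..t+u}"
  shows "binomial (2*t) (t+u) \<le> binomial (2*t) i"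
proof (cases "t \<le> i")
  case True
  then show ?thesis using assms by (intro binomial_antimono) auto
next
  case False
  have "binomial (2*t) i = binomial (2*t) (2*t - i)" using False by (intro binomial_symmetric) simp
  moreover have "binomial (2*t) (t+u) \<le> binomial (2*t) (2*t - i)"
    using assms False by (intro binomial_antimono) auto
  ultimately show ?thesis by simp
qed

lemma E_lo: assumes t1: "1 \<le> t" and u1: "1 \<le> u"
  shows "EE t u \<ge> real (2*u) * bb t * (1 - real u^2 / real t)"
proof (cases "u \<le> t")
  case False
  have "real u^2 \<ge> real u" using u1 by (simp add: power2_eq_square)
  moreover have "real u > real t" using False by simp
  ultimately have "real u^2 / real t > 1" using t1 by simp
  hence "1 - real u^2 / real t < 0" by simp
  moreover have "real (2*u) * bb t \<ge> 0" using bb_pos[of t] by simp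
  ultimately have "real (2*u) * bb t * (1 - real u^2 / real t) \<le> 0" by (simp add: mult_nonneg_nonpos)
  then show ?thesis using EE_full[of t u] False by linarith
next
  case True
  have "real (card {t+1-u..t+u}) * real (binomial (2*t) (t+u)) \<le> (\<Sum>i=t+1-u..t+u. real (binomial (2*t) i))"
    by (rule sum_bounded_below) (use bin_ge_end[OF True] in simp)
  also have "card {t+1-u..t+u} = 2*u" using True u1 by simp
  finally have s: "real (2*u) * real (binomial (2*t) (t+u)) \<le> (\<Sum>i=t+1-u..t+u. real (binomial (2*t) i))" .
  have "real (2*u) * (real (binomial (2*t) t) * (1 - real u^2 / real t)) \<le> real (2*u) * real (binomial (2*t) (t+u))"
    using bin_ratio[OF t1 True] by (intro mult_left_mono) auto
  with s have "real (2*u) * (real (binomial (2*t) t) * (1 - real u^2 / real t)) / 4^t \<le> (\<Sum>i=t+1-u..t+u. real (binomial (2*t) i)) / 4^t"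
    by (intro divide_right_mono) auto
  then show ?thesis using u1 unfolding EE_def bb_def by (simp add: algebra_simps)
qed



definition DD :: "nat \<Rightarrow> real" where "DD t = cosh alpha - (1 + S1 t)"

lemma alpha_pos: "alpha > 0" unfolding alpha_def by simp

lemma cc_nonneg: "cc u \<ge> 0" unfolding cc_def using alpha_pos by simp

lemma EE_nonneg: "EE t u \<ge> 0" unfolding EE_def by (simp add: sum_nonneg)

lemma DD_sums: "(\<lambda>u. cc u * EE t u) sums DD t" unfolding DD_def by (rule D_sums)

lemma DD_up: "DD t \<le> bb t * (alpha * sinh alpha)"
proof (rule sums_le[OF _ DD_sums sums_mult[OF ucc_sums]])
  fix u
  have "cc u * EE t u \<le> cc u * (real (2*u) * bb t)" by (intro mult_left_mono E_up cc_nonneg)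
  then show "cc u * EE t u \<le> bb t * (real (2*u) * cc u)" by (simp add: algebra_simps)
qed

lemma DD_nonneg: "DD t \<ge> 0"
  using sums_le[OF _ sums_zero DD_sums] cc_nonneg EE_nonneg by (simp add: mult_nonneg_nonneg)

lemma fact_cube: "1 \<le> n \<Longrightarrow> 2 * real n ^ 3 \<le> fact (2*n)"
proof (induct n rule: dec_induct)
  case base then show ?case by simp
next
  case (step n)
  have n1: "real n \<ge> 1" using step by simp
  have "(real n + 1)^2 \<le> (2 * real n)^2" using n1 by (intro power_mono) auto
  also have "\<dots> = 4 * real n^2 * 1" by (simp add: power2_eq_square)
  also have "\<dots> \<le> 4 * real n^2 * (real n)" using n1 by (intro mult_left_mono) auto
  also have "\<dots> \<le> (2*real n+1) * real n^2 * (real n) * 2" using n1 by (simp add: algebra_simps)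
  finally have a: "(real n + 1)^2 \<le> (2*real n+1) * real n^3 * 2" by (simp add: power2_eq_square power3_eq_cube algebra_simps)
  have "2 * real (Suc n) ^ 3 = 2 * (real n + 1) * (real n + 1)^2" by (simp add: power2_eq_square power3_eq_cube algebra_simps)
  also have "\<dots> \<le> 2 * (real n + 1) * ((2*real n+1) * real n^3 * 2)" using a by (intro mult_left_mono) auto
  also have "\<dots> = (2*real n + 2) * (2*real n+1) * (2 * real n^3)" by (simp add: algebra_simps)
  also have "\<dots> \<le> (2*real n + 2) * (2*real n+1) * fact (2*n)" using step by (intro mult_left_mono) auto
  also have "\<dots> = fact (2 * Suc n)" by (simp add: algebra_simps)
  finally show ?case .
qed

lemma DD_lo: assumes t1: "1 \<le> t"
  shows "DD t \<ge> bb t * (alpha * sinh alpha) - bb t / real t * (alpha^2 / (1 - alpha^2))"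
proof -
  define x where "x = alpha^2"
  have x0: "0 < x" unfolding x_def using alpha_pos by simp
  have "pi^2 < (4::real)^2" using pi_less_4 pi_gt_zero by (intro power_strict_mono) auto
  then have x1: "x < 1" unfolding x_def alpha_def by (simp add: power_divide)
  have s1: "(\<lambda>u. cc (Suc u) * EE t (Suc u)) sums DD t"
    using DD_sums[of t] by (subst sums_Suc_iff) (simp add: EE_def)
  have s2: "(\<lambda>u. real (2 * Suc u) * cc (Suc u)) sums (alpha * sinh alpha)"
    using ucc_sums by (subst sums_Suc_iff) simp
  have s3: "(\<lambda>u. x * x^u) sums (x * (1 / (1 - x)))"
    by (rule sums_mult) (rule geometric_sums, use x0 x1 in simp)
  have s4: "(\<lambda>u. bb t * (real (2 * Suc u) * cc (Suc u)) - bb t / real t * (x * x^u)) sums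
            (bb t * (alpha * sinh alpha) - bb t / real t * (x * (1 / (1 - x))))"
    by (intro sums_diff sums_mult s2 s3)
  have "bb t * (alpha * sinh alpha) - bb t / real t * (x * (1 / (1 - x))) \<le> DD t"
  proof (rule sums_le[OF _ s4 s1])
    fix u
    define n where "n = Suc u"
    have n1: "1 \<le> n" unfolding n_def by simp
    have ccn: "cc n = x^n / fact (2*n)" unfolding cc_def x_def by (simp add: power_mult)
    have E: "EE t n \<ge> real (2*n) * bb t * (1 - real n^2 / real t)" by (rule E_lo[OF t1 n1])
    have "cc n * EE t n \<ge> cc n * (real (2*n) * bb t * (1 - real n^2 / real t))"
      by (intro mult_left_mono E cc_nonneg)
    moreover have "cc n * (real (2*n) * bb t * (1 - real n^2 / real t)) =
        bb t * (real (2*n) * cc n) - bb t / real t * (2 * real n^3 * cc n)"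
      using t1 by (simp add: field_simps power2_eq_square power3_eq_cube)
    moreover have "2 * real n^3 * cc n \<le> x^n"
    proof -
      have "2 * real n^3 * cc n = x^n * (2 * real n^3 / fact (2*n))" unfolding ccn by simp
      also have "\<dots> \<le> x^n * 1" using fact_cube[OF n1] x0 by (intro mult_left_mono) (auto simp: divide_le_eq)
      finally show ?thesis by simp
    qed
    moreover have "bb t / real t \<ge> 0" using bb_pos[of t] by simp
    ultimately have "cc n * EE t n \<ge> bb t * (real (2*n) * cc n) - bb t / real t * x^n"
      by (smt (verit) mult_left_mono)
    then show "bb t * (real (2 * Suc u) * cc (Suc u)) - bb t / real t * (x * x^u) \<le> cc (Suc u) * EE t (Suc u)"
      unfolding n_def by simp
  qed
  then show ?thesis unfolding x_def by simp
qed



lemma powr32: "(real k + 1) powr (3/2) = (real k + 1) * sqrt (real k + 1)"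
proof -
  have "(real k + 1) powr (3/2) = (real k + 1) powr (1 + 1/2)" by simp
  also have "\<dots> = (real k + 1) powr 1 * (real k + 1) powr (1/2)" by (rule powr_add)
  also have "\<dots> = (real k + 1) * sqrt (real k + 1)" by (simp add: powr_half_sqrt)
  finally show ?thesis .
qed

lemma A_facts: "0 \<le> alpha * sinh alpha" "alpha * sinh alpha < cosh alpha"
proof -
  show "0 \<le> alpha * sinh alpha" using alpha_pos by simp
  have a1: "alpha < 1" unfolding alpha_def using pi_less_4 by simp
  have "sinh alpha < cosh alpha" using cosh_minus_sinh[of alpha] by (metis diff_gt_0_iff_gt exp_gt_zero)
  moreover have "alpha * sinh alpha \<le> sinh alpha" using a1 alpha_pos by (simp add: mult_left_le_one_le)
  ultimately show "alpha * sinh alpha < cosh alpha" by linarith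
qed

lemma M_bound: "alpha^2 / (1 - alpha^2) \<le> 19/50"
proof -
  have p: "pi \<le> 31416/10000" using pi_approx by simp
  have "alpha^2 = pi^2 / 36" unfolding alpha_def by (simp add: power_divide)
  moreover have "pi^2 \<le> (31416/10000)^2" using p pi_gt_zero by (intro power_mono) auto
  ultimately have x: "alpha^2 \<le> (31416/10000)^2/36" by simp
  have n: "(31416/10000::real)^2/36 \<le> 2742/10000" by (simp add: power2_eq_square)
  have y: "alpha^2 \<le> 2742/10000" using x n by linarith
  have g: "\<And>z::real. z \<le> 2742/10000 \<Longrightarrow> z \<le> 19/50 * (1 - z)" by (simp add: field_simps)
  have "alpha^2 \<le> 19/50 * (1 - alpha^2)" using g[OF y] .
  moreover have "1 - alpha^2 > 0" using y by linarith
  ultimately show ?thesis by (simp add: divide_le_eq)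
qed

lemma bb_le1: "bb t \<le> 1"
proof -
  have "bb t ^ 2 * 1 \<le> bb t ^ 2 * (2 * real t + 1)" by (intro mult_left_mono) auto
  then have "bb t ^ 2 \<le> 1^2" using bb_hi[of t] by simp
  then show ?thesis by (rule power2_le_imp_le) simp
qed

lemma ge1_eq: "ge1 t = (cosh alpha - DD t) / 24^t" unfolding ge1_def DD_def by simp

lemma ge1_pos: "ge1 t > 0"
proof -
  have "DD t \<le> bb t * (alpha * sinh alpha)" by (rule DD_up)
  also have "\<dots> \<le> alpha * sinh alpha" using mult_left_le_one_le[OF A_facts(1) less_imp_le[OF bb_pos] bb_le1] .
  finally show ?thesis unfolding ge1_eq using A_facts(2) by simp
qed



lemma poly_bound:
  fixes k b r :: real
  assumes k1: "1 \<le> k" and b0: "0 < b" and bh: "b^2 * (2*k+1) \<le> 1" and r0: "0 < r" and r2: "r^2 = k+1"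
  shows "4 * (19/50) * b * (k+1) * r < 5 * k"
proof -
  define X where "X = 4 * (19/50) * b * (k+1) * r"
  have X0: "X \<ge> 0" unfolding X_def using b0 r0 k1 by simp
  have "X^2 = (76/50)^2 * b^2 * (k+1)^2 * r^2" unfolding X_def by (simp add: power2_eq_square)
  also have "\<dots> = (76/50)^2 * (b^2 * (k+1)^3)" unfolding r2 by (simp add: power2_eq_square power3_eq_cube)
  also have "b^2 * (k+1)^3 \<le> (k+1)^3 / (2*k+1)"
  proof -
    have "b^2 \<le> 1 / (2*k+1)" using bh k1 by (simp add: le_divide_eq)
    then show ?thesis using k1 by (simp add: mult_right_mono divide_simps)
  qed
  also have "(k+1)^3 \<le> (2*k)^3" using k1 by (intro power_mono) auto
  finally have "X^2 \<le> (76/50)^2 * ((2*k)^3 / (2*k+1))" using k1 by (simp add: divide_right_mono)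
  also have "\<dots> < (5*k)^2"
  proof -
    have "(76/50)^2 * (2*k)^3 < (5*k)^2 * (2*k+1)"
    proof -
      have "(76/50)^2 * (2*k)^3 = (76/50)^2 * 8 * k^3" by (simp add: power_mult_distrib)
      also have "\<dots> < 50 * k^3 " using k1 by (simp add: power2_eq_square)
      also have "\<dots> \<le> 50 * k^3 + 25 * k^2" by simp
      also have "\<dots> = (5*k)^2 * (2*k+1)" by (simp add: power2_eq_square power3_eq_cube algebra_simps)
      finally show ?thesis .
    qed
    then show ?thesis using k1 by (simp add: divide_less_eq)
  qed
  finally have "X^2 < (5*k)^2" .
  then have "X < 5*k" by (rule power2_less_imp_less) (use k1 in simp)
  then show ?thesis unfolding X_def .
qed

lemma bb_ge_half: "bb k * (2 * sqrt (real k + 1)) \<ge> 1"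
proof -
  define r where "r = sqrt (real k + 1)"
  have r0: "r > 0" unfolding r_def by simp
  have r2: "r^2 = real k + 1" unfolding r_def by simp
  have "(bb k * (2*r))^2 = bb k^2 * (4*real k + 4)" by (simp add: power_mult_distrib r2 algebra_simps)
  also have "\<dots> \<ge> bb k^2 * (4*real k+1)" by (intro mult_left_mono) auto
  finally have "(bb k * (2*r))^2 \<ge> 1^2" using bb_lo[of k] by simp
  then have "1 \<le> bb k * (2*r)" by (rule power2_le_imp_le) (use r0 bb_pos[of k] in simp)
  then show ?thesis unfolding r_def .
qed

lemma bb_le_65: "bb k * (5 * sqrt (real k + 1)) \<le> 6"
proof -
  define r where "r = sqrt (real k + 1)"
  have r2: "r^2 = real k + 1" unfolding r_def by simp
  have "(bb k * (5*r))^2 = bb k^2 * (25*real k + 25)" by (simp add: power_mult_distrib r2 algebra_simps)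
  also have "\<dots> \<le> bb k^2 * (36 * (2*real k+1))" by (intro mult_left_mono) auto
  also have "\<dots> = 36 * (bb k^2 * (2*real k+1))" by simp
  also have "\<dots> \<le> 36" using bb_hi[of k] by simp
  finally have "(bb k * (5*r))^2 \<le> 6^2" by simp
  then have "bb k * (5*r) \<le> 6" by (rule power2_le_imp_le) simp
  then show ?thesis unfolding r_def .
qed

theorem mainTheorem16:
  fixes n k :: nat
  assumes "n \<ge> 1" and "k \<ge> 1"
  shows "summable (\<lambda>t. ge1 (t + k) / real n ^ (t + k)) \<and>
         L1 k / real n ^ k < (\<Sum>t. ge1 (t + k) / real n ^ (t + k)) \<and>
         (\<Sum>t. ge1 (t + k) / real n ^ (t + k)) < U1 k / real n ^ k"
proof -
  define f where "f t = ge1 (t + k) / real n ^ (t + k)" for t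
  define Kc where "Kc = cosh alpha"
  define A where "A = alpha * sinh alpha"
  define N where "N = real n"
  define r where "r = sqrt (real k + 1)"
  have N1: "N \<ge> 1" unfolding N_def using assms by simp
  have r0: "r > 0" unfolding r_def by simp
  have r2: "r^2 = real k + 1" unfolding r_def by simp
  have A0: "A \<ge> 0" unfolding A_def using A_facts by simp
  have K0: "Kc > 0" unfolding Kc_def by (simp add: cosh_real_pos)
  have p32: "(real k + 1) powr (3/2) = (real k + 1) * r" unfolding r_def by (rule powr32)
  have f_nonneg: "f t \<ge> 0" for t unfolding f_def using ge1_pos[of "t+k"] N1 by simp
  have f_le: "f t \<le> Kc / 24^(t+k)" for t
  proof -
    have "f t \<le> ge1 (t+k)" unfolding f_def N_def[symmetric]
      using ge1_pos[of "t+k"] N1 by (simp add: divide_le_eq one_le_power mult_le_cancel_left1)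
    also have "\<dots> \<le> Kc / 24^(t+k)" unfolding ge1_eq Kc_def using DD_nonneg[of "t+k"]
      by (simp add: divide_right_mono)
    finally show ?thesis .
  qed
  have geo: "(\<lambda>t. Kc / 24^k * (1/24)^t) sums (Kc / 24^k * (1 / (1 - 1/24)))"
    by (intro sums_mult geometric_sums) simp
  have gk: "Kc / 24^(t+k) = Kc / 24^k * (1/24)^t" for t by (simp add: power_add power_one_over)
  have summ: "summable f"
  proof (rule summable_comparison_test')
    show "summable (\<lambda>t. Kc / 24^k * (1/24)^t)" using geo by (rule sums_summable)
    fix t :: nat
    show "norm (f t) \<le> Kc / 24^k * (1/24)^t" using f_le[of t] f_nonneg[of t] gk[of t] by simp
  qed
  have lower: "L1 k / N^k < suminf f"
  proof -
    have DDk: "DD k \<le> 6 * A / (5 * r)"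
    proof -
      have "DD k \<le> bb k * A" unfolding A_def by (rule DD_up)
      also have "bb k \<le> 6 / (5*r)" using bb_le_65[of k] r0 unfolding r_def[symmetric] by (simp add: le_divide_eq)
      then have "bb k * A \<le> 6 / (5*r) * A" using A0 by (rule mult_right_mono)
      finally show ?thesis by simp
    qed
    have pos3: "3 / (10 * ((real k + 1) * r)) > 0" using r0 by simp
    have "L1 k = (Kc - 6 * A / (5 * r) - 3 / (10 * ((real k + 1) * r))) / 24^k"
      unfolding L1_def Kc_def A_def r_def[symmetric] p32 alpha_def by (simp add: mult.assoc)
    also have "\<dots> < (Kc - DD k) / 24^k"
    proof (rule divide_strict_right_mono)
      show "Kc - 6 * A / (5 * r) - 3 / (10 * ((real k + 1) * r)) < Kc - DD k" using DDk pos3 by linarith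
    qed simp
    also have "\<dots> = ge1 k" unfolding ge1_eq Kc_def ..
    finally have "L1 k < ge1 k" .
    then have "L1 k / N^k < ge1 k / N^k" using N1 by (intro divide_strict_right_mono) auto
    also have "ge1 k / N^k = sum f {0}" unfolding f_def N_def by simp
    also have "\<dots> \<le> suminf f" by (rule sum_le_suminf[OF summ]) (auto simp: f_nonneg)
    finally show ?thesis .
  qed
  define c where "c = Kc / 24^k / N^k"
  define d where "d = DD k / 24^k / N^k"
  define h where "h t = c * (1/24)^t - (if t = 0 then d else 0)" for t
  have hs: "h sums (c * (1 / (1 - 1/24)) - d)"
  proof -
    have "(\<lambda>t. c * (1/24)^t) sums (c * (1 / (1 - 1/24)))" by (intro sums_mult geometric_sums) simp
    moreover have "(\<lambda>t. if t = 0 then d else 0) sums d" using sums_single[of 0 "\<lambda>_. d"] by simp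
    ultimately show ?thesis unfolding h_def by (rule sums_diff)
  qed
  have fh: "f t \<le> h t" for t
  proof (cases "t = 0")
    case True
    then show ?thesis unfolding f_def h_def c_def d_def N_def ge1_eq Kc_def by (simp add: diff_divide_distrib)
  next
    case False
    have "f t \<le> Kc / 24^(t+k) / N^k"
    proof -
      have "f t = (Kc - DD (t+k)) / 24^(t+k) / N^(t+k)" unfolding f_def ge1_eq Kc_def N_def by simp
      also have "\<dots> \<le> Kc / 24^(t+k) / N^(t+k)" using DD_nonneg[of "t+k"] N1
        by (intro divide_right_mono) auto
      also have "\<dots> \<le> Kc / 24^(t+k) / N^k" using K0 N1
        by (intro divide_left_mono) (auto intro: power_increasing)
      finally show ?thesis .
    qed
    also have "\<dots> = h t" unfolding h_def c_def using False gk[of t] by simp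
    finally show ?thesis .
  qed
  have up1: "suminf f \<le> c * (1 / (1 - 1/24)) - d"
    by (rule sums_le[OF fh summable_sums[OF summ] hs])
  have DDk: "DD k > A / (2*r) - 5 / (4 * ((real k + 1) * r))"
  proof -
    have k1: "real k \<ge> 1" using assms by simp
    have lo: "DD k \<ge> bb k * A - bb k / real k * (alpha^2 / (1 - alpha^2))"
      unfolding A_def by (rule DD_lo) (use assms in simp)
    have "bb k / real k * (alpha^2 / (1 - alpha^2)) \<le> bb k / real k * (19/50)"
      using M_bound bb_pos[of k] k1 by (intro mult_left_mono) auto
    also have "bb k / real k * (19/50) < 5 / (4 * ((real k + 1) * r))"
    proof -
      have pb: "4 * (19/50) * bb k * (real k + 1) * r < 5 * real k"
        using poly_bound[OF k1 bb_pos _ r0 r2] bb_hi[of k] by simp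
      define P where "P = (real k + 1) * r"
      have P0: "P > 0" unfolding P_def using r0 by simp
      have K0': "real k > 0" using k1 by simp
      have pb': "4 * (19/50) * bb k * P < 5 * real k" using pb unfolding P_def by (simp add: mult.assoc)
      have pos: "4 * real k * P > 0" using K0' P0 by simp
      have "bb k / real k * (19/50) = (4 * (19/50) * bb k * P) / (4 * real k * P)"
        using K0' P0 by (simp add: field_simps)
      also have "\<dots> < (5 * real k) / (4 * real k * P)"
        using pb' pos by (intro divide_strict_right_mono)
      also have "\<dots> = 5 / (4 * P)" using K0' P0 by (simp add: field_simps)
      also have "\<dots> = 5 / (4 * ((real k + 1) * r))" unfolding P_def ..
      finally show ?thesis .
    qed
    finally have e: "bb k / real k * (alpha^2 / (1 - alpha^2)) < 5 / (4 * ((real k + 1) * r))" .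
    have "A / (2*r) \<le> bb k * A"
    proof -
      have "1 / (2*r) \<le> bb k" using bb_ge_half[of k] r0 unfolding r_def[symmetric] by (simp add: divide_le_eq)
      then have "1 / (2*r) * A \<le> bb k * A" using A0 by (rule mult_right_mono)
      then show ?thesis by simp
    qed
    with lo e show ?thesis by linarith
  qed
  have upper: "suminf f < U1 k / N^k"
  proof -
    have "c * (1 / (1 - 1/24)) - d = (24 * Kc / 23 - DD k) / 24^k / N^k"
    proof -
      define Q where "Q = 24^k * N^k"
      have Q0: "Q \<noteq> 0" unfolding Q_def using N1 by simp
      have g: "Kc / Q * (1 / (1 - 1/24)) - DD k / Q = (24 * Kc / 23 - DD k) / Q"
        using Q0 by (simp add: field_simps)
      show ?thesis using g unfolding c_def d_def Q_def by (simp add: divide_divide_eq_left)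
    qed
    also have "\<dots> < (24 * Kc / 23 - A / (2 * r) + 5 / (4 * ((real k + 1) * r))) / 24^k / N^k"
      using DDk N1 by (intro divide_strict_right_mono) auto
    also have "\<dots> = U1 k / N^k"
      unfolding U1_def Kc_def A_def r_def[symmetric] p32 by (simp add: mult.assoc)
    finally show ?thesis using up1 by linarith
  qed
  show ?thesis using summ lower upper unfolding f_def N_def by simp
qed

end
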